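(* Let $r\in[0,1]$ and let $a\in A$. If the pure state $\delta_a$ (all mass on type $a$) is Lyapunov stable under the recombinator dynamics with recombination rate $r$, then: (1) $u(a,a)\ge u((a'_d,a_{-d}),a)$ for every dimension $d\in D$ and every trait $a'_d\in A_d$; and (2) $u(a,a)\ge(1-r)\,u(a',a)$ for every type $a'\in A$.
   Context: Setting: $D=\{1,\dots,|D|\}$ finite, $|D|\ge2$; finite trait sets $A_d$; types $A=\prod_dA_d$, $a=(a_d,a_{-d})$ with $a_{-d}\in\prod_{d'\ne d}A_{d'}$. Payoff $u:A\times A\to\mathbb{R}_{>0}$, $u(a,a')$ being the payoff of type $a$ against type $a'$. For a state $x\in\Delta(A)$: $u_x(a)=\sum_{a'}x(a')u(a,a')$, $u_x=\sum_ax(a)u_x(a)$, $x(a_d)=\sum_{a_{-d}}x(a_d,a_{-d})$, and for $x(a_d)>0$, $u_x(a_d)=\frac1{x(a_d)}\sum_{a_{-d}}x(a_d,a_{-d})u_x(a_d,a_{-d})$ (with $x(a_d)u_x(a_d):=\sum_{a_{-d}}x(a_d,a_{-d})u_x(a_d,a_{-d})$). Recombinator dynamics with rate $r$: $\dot x(a)=(1-r)\frac{x(a)u_x(a)}{u_x}+r\prod_{a_d\in a}\frac{x(a_d)u_x(a_d)}{u_x}-x(a)$. A state $x^*$ is Lyapunov stable if for every neighbourhood $U$ of $x^*$ there is a neighbourhood $V\subseteq U$ with $x^0\in V\Rightarrow x^t\in U$ for all $t>0$. *)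

theory Defs
  imports "HOL-Analysis.Analysis"
begin

text \<open>Dimensions are the elements of a finite type 'd; traits live in a finite type 't,
  with A d the trait set of dimension d.\<close>

definition types :: "('d \<Rightarrow> 't set) \<Rightarrow> ('d \<Rightarrow> 't) set" where
  "types A = {a. \<forall>d. a d \<in> A d}"

definition state_simplex :: "('d \<Rightarrow> 't set) \<Rightarrow> (('d \<Rightarrow> 't) \<Rightarrow> real) set" where
  "state_simplex A = {x. (\<forall>b. x b \<ge> 0) \<and> (\<forall>b. b \<notin> types A \<longrightarrow> x b = 0)
                   \<and> (\<Sum>b\<in>types A. x b) = 1}"

definition payoff_vs :: "('d \<Rightarrow> 't set) \<Rightarrow> (('d \<Rightarrow> 't) \<Rightarrow> ('d \<Rightarrow> 't) \<Rightarrow> real)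
    \<Rightarrow> (('d \<Rightarrow> 't) \<Rightarrow> real) \<Rightarrow> ('d \<Rightarrow> 't) \<Rightarrow> real" where
  "payoff_vs A u x a = (\<Sum>a'\<in>types A. x a' * u a a')"

definition mean_payoff :: "('d \<Rightarrow> 't set) \<Rightarrow> (('d \<Rightarrow> 't) \<Rightarrow> ('d \<Rightarrow> 't) \<Rightarrow> real)
    \<Rightarrow> (('d \<Rightarrow> 't) \<Rightarrow> real) \<Rightarrow> real" where
  "mean_payoff A u x = (\<Sum>a\<in>types A. x a * payoff_vs A u x a)"

text \<open>x(a_d) u_x(a_d) = sum over a_{-d} of x(a_d,a_{-d}) u_x(a_d,a_{-d})\<close>
definition trait_weighted_payoff :: "('d \<Rightarrow> 't set) \<Rightarrow> (('d \<Rightarrow> 't) \<Rightarrow> ('d \<Rightarrow> 't) \<Rightarrow> real)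
    \<Rightarrow> (('d \<Rightarrow> 't) \<Rightarrow> real) \<Rightarrow> 'd \<Rightarrow> 't \<Rightarrow> real" where
  "trait_weighted_payoff A u x d t = (\<Sum>a\<in>{a\<in>types A. a d = t}. x a * payoff_vs A u x a)"

definition recomb_field :: "('d \<Rightarrow> 't set) \<Rightarrow> (('d \<Rightarrow> 't) \<Rightarrow> ('d \<Rightarrow> 't) \<Rightarrow> real) \<Rightarrow> real
    \<Rightarrow> (('d \<Rightarrow> 't) \<Rightarrow> real) \<Rightarrow> ('d \<Rightarrow> 't) \<Rightarrow> real" where
  "recomb_field A u r x a =
     (1 - r) * (x a * payoff_vs A u x a / mean_payoff A u x)
     + r * (\<Prod>d\<in>UNIV. trait_weighted_payoff A u x d (a d) / mean_payoff A u x)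
     - x a"

definition recomb_solution :: "('d \<Rightarrow> 't set) \<Rightarrow> (('d \<Rightarrow> 't) \<Rightarrow> ('d \<Rightarrow> 't) \<Rightarrow> real) \<Rightarrow> real
    \<Rightarrow> (real \<Rightarrow> ('d \<Rightarrow> 't) \<Rightarrow> real) \<Rightarrow> bool" where
  "recomb_solution A u r x \<longleftrightarrow>
     (\<forall>b. \<forall>t\<ge>0. ((\<lambda>s. x s b) has_real_derivative recomb_field A u r (x t) b) (at t within {0..}))"

text \<open>Lyapunov stability of a state (neighbourhoods in the product topology,
  initial states taken in the state_simplex).\<close>
definition lyapunov_stable :: "('d \<Rightarrow> 't set) \<Rightarrow> (('d \<Rightarrow> 't) \<Rightarrow> ('d \<Rightarrow> 't) \<Rightarrow> real) \<Rightarrow> real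
    \<Rightarrow> (('d \<Rightarrow> 't) \<Rightarrow> real) \<Rightarrow> bool" where
  "lyapunov_stable A u r xs \<longleftrightarrow>
     (\<forall>U. open U \<and> xs \<in> U \<longrightarrow>
        (\<exists>V. open V \<and> xs \<in> V \<and> V \<subseteq> U \<and>
           (\<forall>x. recomb_solution A u r x \<and> x 0 \<in> V \<inter> state_simplex A \<longrightarrow> (\<forall>t>0. x t \<in> U))))"

definition pure_state :: "('d \<Rightarrow> 't) \<Rightarrow> ('d \<Rightarrow> 't) \<Rightarrow> real" where
  "pure_state a = (\<lambda>b. if b = a then 1 else 0)"

end

theory Submission
  imports Defs
begin


lemma J_deriv:
  fixes g :: "real \<Rightarrow> 'a::banach"
  assumes "continuous_on UNIV g" "0 \<le> t"
  shows "((\<lambda>u. integral {0..u} g) has_vector_derivative g t) (at t within {0..})"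
proof -
  have "((\<lambda>u. integral {0..u} g) has_vector_derivative g t) (at t within {0..t+1})"
    by (rule integral_has_vector_derivative) (auto intro: continuous_on_subset assms)
  moreover have "at t within {0..t+1} = at t within {0..}"
    by (rule at_within_nhd[of _ "{..<t+1}"]) auto
  ultimately show ?thesis by simp
qed

lemma exp_integral:
  fixes K :: real assumes "K > 0" "0 \<le> T"
  shows "((\<lambda>s. exp (K * s)) has_integral (exp (K * T) - 1)/K) {0..T}"
proof -
  have "((\<lambda>s. exp (K * s)) has_integral ((\<lambda>s. exp (K * s)/K) T - (\<lambda>s. exp (K * s)/K) 0)) {0..T}"
    apply (rule fundamental_theorem_of_calculus[OF assms(2)])
    apply (rule has_vector_derivative_eq_rhs)
     apply (rule has_real_derivative_iff_has_vector_derivative[THEN iffD1])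
     using assms(1) apply (auto intro!: derivative_eq_intros)
    done
  then show ?thesis by (simp add: diff_divide_distrib)
qed

lemma ode_global_exists:
  fixes f :: "'a::banach \<Rightarrow> 'a" and x0 :: 'a
  assumes lip: "L-lipschitz_on UNIV f"
  shows "\<exists>x. x 0 = x0 \<and> (\<forall>t\<ge>0. (x has_vector_derivative f (x t)) (at t within {0..}))"
proof -
  have L0: "0 \<le> L" using lip lipschitz_on_nonneg by blast
  have fL: "norm (f p - f q) \<le> L * norm (p - q)" for p q
    using lipschitz_onD[OF lip, of p q] by (simp add: dist_norm)
  have contf: "continuous_on UNIV f" using lip lipschitz_on_continuous_on by blast
  define K where "K = 2*L+1"
  have K0: "K > 0" using L0 by (simp add: K_def)
  have LK: "L / K < 1" "0 \<le> L/K" using L0 K0 by (auto simp: K_def field_simps)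
  define G where "G y s = f (exp (K * s) *\<^sub>R apply_bcontfun y s)" for y :: "real \<Rightarrow>\<^sub>C 'a" and s
  have contG: "continuous_on UNIV (G y)" for y
    unfolding G_def by (intro continuous_on_compose2[OF contf] continuous_intros) auto
  define I where "I y u = integral {0..u} (G y)" for y u
  have Ider: "0 \<le> u \<Longrightarrow> (I y has_vector_derivative G y u) (at u within {0..})" for y u
    unfolding I_def by (rule J_deriv[OF contG])
  have Icont: "continuous_on {0..} (I y)" for y
    using Ider by (metis atLeast_iff continuous_on_eq_continuous_within has_vector_derivative_continuous)
  have intG: "G y integrable_on {0..u}" for y u
    by (rule integrable_continuous_real) (rule continuous_on_subset[OF contG]; simp)
  have Idiff: "norm (I y u - I w u) \<le> L * dist y w * ((exp (K * u) - 1)/K)" if "0 \<le> u" for y w u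
  proof -
    have hi: "((\<lambda>s. (L * dist y w) * exp (K * s)) has_integral (L * dist y w) * ((exp (K * u) - 1)/K)) {0..u}"
      by (rule has_integral_mult_right[OF exp_integral[OF K0 that]])
    have "I y u - I w u = integral {0..u} (\<lambda>s. G y s - G w s)"
      unfolding I_def by (rule integral_diff[symmetric]) (auto intro: intG)
    also have "norm \<dots> \<le> integral {0..u} (\<lambda>s. (L * dist y w) * exp (K * s))"
    proof (rule integral_norm_bound_integral)
      show "(\<lambda>s. G y s - G w s) integrable_on {0..u}" by (intro integrable_diff intG)
      show "(\<lambda>s. (L * dist y w) * exp (K * s)) integrable_on {0..u}"
        using hi by blast
      fix s assume "s \<in> {0..u}"
      have "norm (G y s - G w s) \<le> L * norm (exp (K * s) *\<^sub>R y s - exp (K * s) *\<^sub>R w s)"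
        unfolding G_def by (rule fL)
      also have "\<dots> = L * (exp (K * s) * dist (y s) (w s))"
        by (simp add: dist_norm scaleR_diff_right[symmetric])
      also have "\<dots> \<le> L * (exp (K * s) * dist y w)"
        using dist_bounded L0 by (intro mult_left_mono) auto
      finally show "norm (G y s - G w s) \<le> L * dist y w * exp (K * s)" by (simp add: algebra_simps)
    qed
    also have "\<dots> = L * dist y w * ((exp (K * u) - 1)/K)"
      using integral_unique[OF hi] by simp
    finally show ?thesis .
  qed
  have I0: "I 0 u = u *\<^sub>R f 0" if "0 \<le> u" for u
  proof -
    have "G 0 = (\<lambda>s. f 0)" by (simp add: G_def fun_eq_iff)
    then show ?thesis using that by (simp add: I_def)
  qed
  have Inorm: "norm (I y u) \<le> u * norm (f 0) + L * norm y * ((exp (K * u) - 1)/K)" if "0 \<le> u" for y u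
  proof -
    have "norm (I y u) \<le> norm (I y u - I 0 u) + norm (I 0 u)"
      by (metis diff_add_cancel norm_triangle_ineq)
    also have "\<dots> \<le> L * dist y 0 * ((exp (K * u) - 1)/K) + u * norm (f 0)"
      using Idiff[OF that, of y 0] I0[OF that] that by simp
    finally show ?thesis by (simp add: dist_norm)
  qed
  define \<phi> where "\<phi> y t = exp (- K * max 0 t) *\<^sub>R (x0 + I y (max 0 t))" for y t
  have keyb: "exp (- K * u) * (A + u * B + C * ((exp (K * u) - 1)/K)) \<le> A + B / K + C / K"
    if "0 \<le> u" "0 \<le> A" "0 \<le> B" "0 \<le> C" for u A B C
  proof -
    define E where "E = exp (K * u)"
    have E1: "1 + K * u \<le> E" unfolding E_def by (rule exp_ge_add_one_self)
    have Epos: "E > 0" unfolding E_def by simp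
    have em: "exp (- K * u) = 1 / E" unfolding E_def by (simp add: exp_minus inverse_eq_divide)
    have E1': "1 \<le> E" using E1 K0 that by (smt (verit) mult_nonneg_nonneg)
    have "A / E \<le> A" using divide_left_mono[of 1 E A] E1' that by simp
    moreover have "u * B / E \<le> B / K"
    proof -
      have "B * (K * u) \<le> B * E" using E1 that by (intro mult_left_mono) auto
      then show ?thesis using K0 Epos
        by (simp add: divide_le_eq le_divide_eq) (metis mult.commute mult.left_commute)
    qed
    moreover have "C * ((E - 1)/K) / E \<le> C / K" using E1 that K0 Epos
      by (simp add: divide_le_eq le_divide_eq field_simps mult_left_mono)
    moreover have "exp (- K * u) * (A + u * B + C * ((exp (K * u) - 1)/K)) = A/E + u*B/E + C*((E-1)/K)/E"
      unfolding em E_def[symmetric] by (simp add: add_divide_distrib)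
    ultimately show ?thesis by linarith
  qed
  have \<phi>_bc: "\<phi> y \<in> bcontfun" for y
  proof (rule bcontfun_normI)
    show "continuous_on UNIV (\<phi> y)"
      unfolding \<phi>_def by (intro continuous_intros continuous_on_compose2[OF Icont]) (auto simp: max_def)
    fix t :: real
    define u where "u = max 0 t"
    have u0: "0 \<le> u" by (simp add: u_def)
    have "norm (\<phi> y t) = exp (- K * u) * norm (x0 + I y u)" by (simp add: \<phi>_def u_def)
    also have "\<dots> \<le> exp (- K * u) * (norm x0 + (u * norm (f 0) + L * norm y * ((exp (K * u) - 1)/K)))"
      by (intro mult_left_mono order.trans[OF norm_triangle_ineq] add_left_mono Inorm u0) simp
    also have "\<dots> \<le> norm x0 + norm (f 0) / K + L * norm y / K"
      using keyb[OF u0, of "norm x0" "norm (f 0)" "L * norm y"] L0 by (simp add: add.assoc)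
    finally show "norm (\<phi> y t) \<le> norm x0 + norm (f 0) / K + L * norm y / K" .
  qed
  define \<Phi> where "\<Phi> y = Bcontfun (\<phi> y)" for y
  have \<Phi>a: "apply_bcontfun (\<Phi> y) = \<phi> y" for y
    unfolding \<Phi>_def using \<phi>_bc by (simp add: Bcontfun_inverse)
  have contr: "\<forall>y w. dist (\<Phi> y) (\<Phi> w) \<le> (L/K) * dist y w"
  proof (intro allI dist_bound)
    fix y w and t :: real
    define u where "u = max 0 t"
    have u0: "0 \<le> u" by (simp add: u_def)
    have "dist (\<Phi> y t) (\<Phi> w t) = exp (- K * u) * norm (I y u - I w u)"
      by (simp add: \<Phi>a \<phi>_def u_def dist_norm scaleR_diff_right[symmetric])
    also have "\<dots> \<le> exp (- K * u) * (0 + u * 0 + L * dist y w * ((exp (K * u) - 1)/K))"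
      using Idiff[OF u0, of y w] by (intro mult_left_mono) auto
    also have "\<dots> \<le> 0 + 0 / K + L * dist y w / K"
      by (rule keyb[OF u0]) (use L0 in auto)
    finally show "dist (\<Phi> y t) (\<Phi> w t) \<le> L / K * dist y w" by simp
  qed
  from banach_fix_type[OF LK(2) LK(1) contr] obtain y where y: "\<Phi> y = y" by metis
  define X where "X t = x0 + I y t" for t
  have GX: "G y t = f (X t)" if "0 \<le> t" for t
  proof -
    have "apply_bcontfun y t = exp (- K * t) *\<^sub>R X t"
      using arg_cong[OF y, of "\<lambda>z. apply_bcontfun z t"] that by (simp add: \<Phi>a \<phi>_def X_def)
    then show ?thesis
      by (simp add: G_def exp_minus[symmetric] exp_add[symmetric])
  qed
  show ?thesis
  proof (intro exI[of _ X] conjI allI impI)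
    show "X 0 = x0" by (simp add: X_def I_def)
    fix t :: real assume t: "0 \<le> t"
    have "((\<lambda>t. I y t + x0) has_vector_derivative G y t) (at t within {0..})"
      unfolding has_vector_derivative_add_const by (rule Ider[OF t])
    then show "(X has_vector_derivative f (X t)) (at t within {0..})"
    proof -
      have "X = (\<lambda>t. I y t + x0)" by (simp add: X_def fun_eq_iff add.commute)
      then show ?thesis using GX[OF t] \<open>((\<lambda>t. I y t + x0) has_vector_derivative G y t) (at t within {0..})\<close> by simp
    qed
  qed
qed

lemma mono_from_deriv:
  fixes h :: "real \<Rightarrow> real"
  assumes d: "\<And>s. 0 \<le> s \<Longrightarrow> (h has_real_derivative D s) (at s within {0..})"
    and nn: "\<And>s. 0 \<le> s \<Longrightarrow> D s \<ge> 0" and t: "0 \<le> t"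
  shows "h 0 \<le> h t"
proof (rule DERIV_nonneg_imp_increasing_open[OF t])
  fix x :: real assume x: "0 < x" "x < t"
  have "at x within {0..} = at x" by (rule at_within_interior) (use x in simp)
  then show "\<exists>y. (h has_real_derivative y) (at x) \<and> 0 \<le> y"
    using d[of x] nn[of x] x by auto
next
  have "continuous_on {0..} h"
    unfolding continuous_on_eq_continuous_within using d DERIV_continuous by fastforce
  then show "continuous_on {0..t} h" by (rule continuous_on_subset) auto
qed

lemma exp_weight_mono:
  fixes g :: "real \<Rightarrow> real"
  assumes d: "\<And>s. 0 \<le> s \<Longrightarrow> (g has_real_derivative D s) (at s within {0..})"
    and nn: "\<And>s. 0 \<le> s \<Longrightarrow> D s + c * g s \<ge> 0" and t: "0 \<le> t"
  shows "g 0 \<le> exp (c * t) * g t"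
proof -
  have "(\<lambda>s. exp (c * s) * g s) 0 \<le> (\<lambda>s. exp (c * s) * g s) t"
  proof (rule mono_from_deriv[OF _ _ t])
    fix s :: real assume s: "0 \<le> s"
    show "((\<lambda>s. exp (c * s) * g s) has_real_derivative exp (c * s) * (D s + c * g s)) (at s within {0..})"
      by (rule derivative_eq_intros d s refl | simp add: algebra_simps)+
    show "0 \<le> exp (c * s) * (D s + c * g s)" using nn[OF s] by simp
  qed
  then show ?thesis by simp
qed

lemma exp_weight_const:
  fixes g :: "real \<Rightarrow> real"
  assumes d: "\<And>s. 0 \<le> s \<Longrightarrow> (g has_real_derivative C - g s) (at s within {0..})"
    and t: "0 \<le> t"
  shows "g t = C + exp (- t) * (g 0 - C)"
proof -
  have a: "g 0 - C \<le> exp (1 * t) * (g t - C)"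
    by (rule exp_weight_mono[where D="\<lambda>s. C - g s", OF _ _ t]) (auto intro!: derivative_eq_intros d)
  have b: "C - g 0 \<le> exp (1 * t) * (C - g t)"
    by (rule exp_weight_mono[where D="\<lambda>s. - (C - g s)", OF _ _ t]) (auto intro!: derivative_eq_intros d)
  have "exp t * (g t - C) = g 0 - C" using a b by (simp add: algebra_simps)
  then have "exp (-t) * (exp t * (g t - C)) = exp (-t) * (g 0 - C)" by simp
  then show ?thesis by (simp add: exp_minus field_simps)
qed




definition LB :: "'a::metric_space set \<Rightarrow> ('a \<Rightarrow> real) \<Rightarrow> bool" where
  "LB X f \<longleftrightarrow> (\<exists>L. L-lipschitz_on X f) \<and> (\<exists>M. \<forall>x\<in>X. \<bar>f x\<bar> \<le> M)"

lemma LB_const: "LB X (\<lambda>x. c)"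
  unfolding LB_def by (auto intro: lipschitz_on_constant)

lemma LB_add: "LB X f \<Longrightarrow> LB X g \<Longrightarrow> LB X (\<lambda>x. f x + g x)"
proof -
  assume a: "LB X f" "LB X g"
  obtain L1 M1 L2 M2 where l1: "L1-lipschitz_on X f" and m1: "\<And>x. x\<in>X \<Longrightarrow> \<bar>f x\<bar> \<le> M1"
    and l2: "L2-lipschitz_on X g" and m2: "\<And>x. x\<in>X \<Longrightarrow> \<bar>g x\<bar> \<le> M2"
    using a unfolding LB_def by metis
  have "(L1 + L2)-lipschitz_on X (\<lambda>x. f x + g x)" by (rule lipschitz_on_add[OF l1 l2])
  moreover have "\<forall>x\<in>X. \<bar>f x + g x\<bar> \<le> M1 + M2"
    using m1 m2 by (smt (verit))
  ultimately show ?thesis unfolding LB_def by blast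
qed

lemma LB_neg: "LB X f \<Longrightarrow> LB X (\<lambda>x. - f x)"
  unfolding LB_def by (auto simp: lipschitz_on_def dist_real_def abs_minus_commute)

lemma LB_diff: "LB X f \<Longrightarrow> LB X g \<Longrightarrow> LB X (\<lambda>x. f x - g x)"
  using LB_add[of X f "\<lambda>x. - g x"] LB_neg[of X g] by simp

lemma LB_mult:
  assumes "LB X f" "LB X g" shows "LB X (\<lambda>x. f x * g x)"
proof -
  obtain L1 M1 L2 M2 where l1: "L1-lipschitz_on X f" and m1: "\<And>x. x\<in>X \<Longrightarrow> \<bar>f x\<bar> \<le> M1"
    and l2: "L2-lipschitz_on X g" and m2: "\<And>x. x\<in>X \<Longrightarrow> \<bar>g x\<bar> \<le> M2"
    using assms unfolding LB_def by metis
  define N1 where "N1 = max M1 0"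
  define N2 where "N2 = max M2 0"
  have n1: "\<bar>f x\<bar> \<le> N1" if "x \<in> X" for x using m1[OF that] by (simp add: N1_def)
  have n2: "\<bar>g x\<bar> \<le> N2" if "x \<in> X" for x using m2[OF that] by (simp add: N2_def)
  have N0: "0 \<le> N1" "0 \<le> N2" by (auto simp: N1_def N2_def)
  have L0: "0 \<le> L1" "0 \<le> L2" using l1 l2 lipschitz_on_nonneg by blast+
  have "(N1 * L2 + L1 * N2)-lipschitz_on X (\<lambda>x. f x * g x)"
  proof (rule lipschitz_onI)
    fix x y assume x: "x \<in> X" and y: "y \<in> X"
    have e: "f x * g x - f y * g y = f x * (g x - g y) + (f x - f y) * g y" by (simp add: algebra_simps)
    have "\<bar>f x * (g x - g y)\<bar> \<le> N1 * (L2 * dist x y)"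
      unfolding abs_mult using n1[OF x] lipschitz_onD[OF l2 x y] N0
      by (intro mult_mono) (auto simp: dist_real_def)
    moreover have "\<bar>(f x - f y) * g y\<bar> \<le> (L1 * dist x y) * N2"
      unfolding abs_mult using n2[OF y] lipschitz_onD[OF l1 x y] L0
      by (intro mult_mono) (auto simp: dist_real_def)
    ultimately show "dist (f x * g x) (f y * g y) \<le> (N1 * L2 + L1 * N2) * dist x y"
      unfolding dist_real_def e by (smt (verit, best) distrib_right mult.assoc mult.commute)
  next
    show "0 \<le> N1 * L2 + L1 * N2" using N0 L0 by simp
  qed
  moreover have "\<forall>x\<in>X. \<bar>f x * g x\<bar> \<le> N1 * N2"
    using n1 n2 N0 by (auto simp: abs_mult intro!: mult_mono)
  ultimately show ?thesis unfolding LB_def by blast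
qed

lemma LB_inverse:
  assumes "LB X g" "c > 0" "\<And>x. x \<in> X \<Longrightarrow> g x \<ge> c" shows "LB X (\<lambda>x. 1 / g x)"
proof -
  obtain L where l: "L-lipschitz_on X g" using assms unfolding LB_def by blast
  have L0: "0 \<le> L" using l lipschitz_on_nonneg by blast
  have "(L / c^2)-lipschitz_on X (\<lambda>x. 1 / g x)"
  proof (rule lipschitz_onI)
    fix x y assume x: "x \<in> X" and y: "y \<in> X"
    have gx: "g x \<ge> c" "g y \<ge> c" using assms(3) x y by auto
    have "dist (1 / g x) (1 / g y) = \<bar>g y - g x\<bar> / (g x * g y)"
      using gx assms(2) by (simp add: dist_real_def field_simps abs_div)
    also have "\<dots> \<le> (L * dist x y) / (c * c)"
    proof (rule frac_le)
      show "0 \<le> L * dist x y" using L0 by simp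
      show "\<bar>g y - g x\<bar> \<le> L * dist x y"
        using lipschitz_onD[OF l y x] by (simp add: dist_real_def dist_commute)
      show "0 < c * c" using assms(2) by simp
      show "c * c \<le> g x * g y" using gx assms(2) by (intro mult_mono) auto
    qed
    finally show "dist (1 / g x) (1 / g y) \<le> L / c^2 * dist x y" by (simp add: power2_eq_square)
  next
    show "0 \<le> L / c^2" using L0 by simp
  qed
  moreover have "\<forall>x\<in>X. \<bar>1 / g x\<bar> \<le> 1 / c"
  proof
    fix x assume "x \<in> X"
    then have "c \<le> g x" by (rule assms(3))
    then show "\<bar>1 / g x\<bar> \<le> 1 / c" using assms(2) by (simp add: frac_le)
  qed
  ultimately show ?thesis unfolding LB_def by blast
qed

lemma LB_divide:
  assumes "LB X f" "LB X g" "c > 0" "\<And>x. x \<in> X \<Longrightarrow> g x \<ge> c" shows "LB X (\<lambda>x. f x / g x)"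
  using LB_mult[OF assms(1) LB_inverse[OF assms(2-4)]] by simp

lemma LB_sum:
  assumes "\<And>i. i \<in> S \<Longrightarrow> LB X (f i)" shows "LB X (\<lambda>x. \<Sum>i\<in>S. f i x)"
  using assms
proof (induction S rule: infinite_finite_induct)
  case (infinite S) then show ?case by (simp add: LB_const)
next
  case empty then show ?case by (simp add: LB_const)
next
  case (insert i S) then show ?case by (simp add: LB_add)
qed

lemma LB_prod:
  assumes "\<And>i. i \<in> S \<Longrightarrow> LB X (f i)" shows "LB X (\<lambda>x. \<Prod>i\<in>S. f i x)"
  using assms
proof (induction S rule: infinite_finite_induct)
  case (infinite S) then show ?case by (simp add: LB_const)
next
  case empty then show ?case by (simp add: LB_const)
next
  case (insert i S) then show ?case by (simp add: LB_mult)
qed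

lemma LB_nth:
  fixes X :: "(real^'n) set"
  assumes "\<And>x. x \<in> X \<Longrightarrow> \<bar>x $ i\<bar> \<le> M" shows "LB X (\<lambda>x. x $ i)"
proof -
  have "1-lipschitz_on X (\<lambda>x. x $ i)"
  proof (rule lipschitz_onI)
    fix x y :: "real^'n"
    show "dist (x $ i) (y $ i) \<le> 1 * dist x y"
      using component_le_norm_cart[of "x - y" i] by (simp add: dist_real_def dist_norm)
  qed simp
  then show ?thesis unfolding LB_def using assms by blast
qed

lemma LB_vec:
  fixes h :: "'n::finite \<Rightarrow> 'a::metric_space \<Rightarrow> real"
  assumes "\<And>i. LB X (h i)" shows "\<exists>L. L-lipschitz_on X (\<lambda>x. (\<chi> i. h i x) :: real^'n)"
proof -
  have "\<forall>i. \<exists>L. L-lipschitz_on X (h i)" using assms unfolding LB_def by blast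
  then obtain L where L: "\<And>i. (L i)-lipschitz_on X (h i)" by metis
  have "(\<Sum>i\<in>UNIV. L i)-lipschitz_on X (\<lambda>x. (\<chi> i. h i x) :: real^'n)"
  proof (rule lipschitz_onI)
    fix x y assume x: "x \<in> X" and y: "y \<in> X"
    have "dist ((\<chi> i. h i x) :: real^'n) (\<chi> i. h i y) \<le> (\<Sum>i\<in>UNIV. \<bar>h i x - h i y\<bar>)"
      using norm_le_l1_cart[of "((\<chi> i. h i x) :: real^'n) - (\<chi> i. h i y)"] by (simp add: dist_norm)
    also have "\<dots> \<le> (\<Sum>i\<in>UNIV. L i * dist x y)"
      by (intro sum_mono) (use lipschitz_onD[OF L x y] in \<open>simp add: dist_real_def\<close>)
    finally show "dist ((\<chi> i. h i x) :: real^'n) (\<chi> i. h i y) \<le> (\<Sum>i\<in>UNIV. L i) * dist x y"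
      by (simp add: sum_distrib_right)
  next
    show "0 \<le> (\<Sum>i\<in>UNIV. L i)" using L lipschitz_on_nonneg by (blast intro: sum_nonneg)
  qed
  then show ?thesis by blast
qed




definition SS :: "('d::finite \<Rightarrow> 't::finite set) \<Rightarrow> (real^('d\<Rightarrow>'t)) set" where
  "SS A = {v. (\<forall>b. 0 \<le> v$b) \<and> (\<forall>b. b \<notin> types A \<longrightarrow> v$b = 0) \<and> (\<Sum>b\<in>types A. v$b) = 1}"

lemma SS_iff: "v \<in> SS A \<longleftrightarrow> vec_nth v \<in> state_simplex A"
  by (simp add: SS_def state_simplex_def)

definition umin :: "('d \<Rightarrow> 't set) \<Rightarrow> (('d \<Rightarrow> 't) \<Rightarrow> ('d \<Rightarrow> 't) \<Rightarrow> real) \<Rightarrow> real" where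
  "umin A u = Min ((\<lambda>(b,c). u b c) ` (types A \<times> types A))"
definition umax :: "('d \<Rightarrow> 't set) \<Rightarrow> (('d \<Rightarrow> 't) \<Rightarrow> ('d \<Rightarrow> 't) \<Rightarrow> real) \<Rightarrow> real" where
  "umax A u = Max ((\<lambda>(b,c). u b c) ` (types A \<times> types A))"

definition hc where
  "hc A u r b v = (if b \<in> types A then recomb_field A u r (vec_nth v) b + v$b else 0)"

lemma fin_types[simp]: "finite (types (A :: 'd::finite \<Rightarrow> 't::finite set))"
  by (rule finite_subset[OF subset_UNIV]) simp

lemma simplex_nonneg: "x \<in> state_simplex A \<Longrightarrow> 0 \<le> x b"
  by (simp add: state_simplex_def)
lemma simplex_off: "x \<in> state_simplex A \<Longrightarrow> b \<notin> types A \<Longrightarrow> x b = 0"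
  by (simp add: state_simplex_def)
lemma simplex_sum: "x \<in> state_simplex A \<Longrightarrow> (\<Sum>b\<in>types A. x b) = 1"
  by (simp add: state_simplex_def)

lemma simplex_le1:
  fixes A :: "'d::finite \<Rightarrow> 't::finite set"
  assumes "x \<in> state_simplex A" shows "x b \<le> 1"
proof (cases "b \<in> types A")
  case True
  have "x b \<le> (\<Sum>c\<in>types A. x c)"
    by (rule member_le_sum) (use True simplex_nonneg[OF assms] in auto)
  then show ?thesis using simplex_sum[OF assms] by simp
qed (simp add: simplex_off[OF assms])

lemma simplex_types_ne: "x \<in> state_simplex A \<Longrightarrow> types A \<noteq> {}"
  using simplex_sum by fastforce

context
  fixes A :: "'d::finite \<Rightarrow> 't::finite set" and u :: "('d \<Rightarrow> 't) \<Rightarrow> ('d \<Rightarrow> 't) \<Rightarrow> real"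
  assumes upos: "\<And>b c. b \<in> types A \<Longrightarrow> c \<in> types A \<Longrightarrow> u b c > 0"
begin

lemma umin_le: "b \<in> types A \<Longrightarrow> c \<in> types A \<Longrightarrow> umin A u \<le> u b c"
  unfolding umin_def by (rule Min_le) (simp, rule image_eqI[of _ _ "(b,c)"], auto)

lemma umax_ge: "b \<in> types A \<Longrightarrow> c \<in> types A \<Longrightarrow> u b c \<le> umax A u"
  unfolding umax_def by (rule Max_ge) (simp, rule image_eqI[of _ _ "(b,c)"], auto)

lemma umin_pos: "types A \<noteq> {} \<Longrightarrow> umin A u > 0"
  unfolding umin_def by (subst Min_gr_iff) (auto intro: upos)

lemma pv_nonneg: 
  assumes x: "x \<in> state_simplex A" and b: "b \<in> types A" shows "payoff_vs A u x b \<ge> 0"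
  unfolding payoff_vs_def
proof (rule sum_nonneg)
  fix c assume c: "c \<in> types A"
  show "0 \<le> x c * u b c" using simplex_nonneg[OF x, of c] upos[OF b c] by simp
qed

lemma mean_ge:
  assumes x: "x \<in> state_simplex A" shows "mean_payoff A u x \<ge> umin A u"
proof -
  have "(\<Sum>b\<in>types A. x b * (\<Sum>c\<in>types A. x c * umin A u)) \<le> mean_payoff A u x"
    unfolding mean_payoff_def payoff_vs_def
    by (intro sum_mono mult_left_mono umin_le simplex_nonneg[OF x]) auto
  moreover have "(\<Sum>b\<in>types A. x b * (\<Sum>c\<in>types A. x c * umin A u)) = umin A u"
    using simplex_sum[OF x] by (simp add: sum_distrib_right[symmetric] sum_distrib_left[symmetric])
  ultimately show ?thesis by simp
qed

lemma mean_pos: assumes x: "x \<in> state_simplex A" shows "mean_payoff A u x > 0"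
  using mean_ge[OF x] umin_pos[OF simplex_types_ne[OF x]] by linarith

lemma tw_nonneg: "x \<in> state_simplex A \<Longrightarrow> trait_weighted_payoff A u x d t \<ge> 0"
  unfolding trait_weighted_payoff_def
  by (rule sum_nonneg) (simp add: simplex_nonneg pv_nonneg)

lemma tw_sum: "(\<Sum>t\<in>A d. trait_weighted_payoff A u x d t) = mean_payoff A u x"
  unfolding trait_weighted_payoff_def mean_payoff_def
  by (rule sum.group) (auto simp: types_def)

lemma types_PiE: "PiE UNIV A = types A"
  by (auto simp: types_def PiE_def extensional_def)

end



lemma SS_closed: "closed (SS A)"
  unfolding SS_def
  by (intro closed_Collect_conj closed_Collect_all closed_Collect_imp closed_Collect_le closed_Collect_eq
      continuous_intros open_Collect_const) 

lemma SS_convex: "convex (SS A)"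
  unfolding convex_def SS_def
  by (auto simp: sum.distrib sum_distrib_left[symmetric])

lemma SS_ne: "a \<in> types A \<Longrightarrow> (\<chi> b. if b = a then 1 else 0) \<in> SS A"
  by (simp add: SS_def)

context
  fixes A :: "'d::finite \<Rightarrow> 't::finite set" and u :: "('d \<Rightarrow> 't) \<Rightarrow> ('d \<Rightarrow> 't) \<Rightarrow> real"
  assumes upos: "\<And>b c. b \<in> types A \<Longrightarrow> c \<in> types A \<Longrightarrow> u b c > 0"
begin

lemma prod_sum_types:
  fixes g :: "'d \<Rightarrow> 't \<Rightarrow> real"
  shows "(\<Sum>b\<in>types A. \<Prod>d\<in>UNIV. g d (b d)) = (\<Prod>d\<in>UNIV. \<Sum>t\<in>A d. g d t)"
  using prod_sum_PiE[of UNIV A g] by (simp add: types_PiE[OF upos])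

lemma hc_sum:
  assumes v: "v \<in> SS A" shows "(\<Sum>b\<in>types A. hc A u r b v) = 1"
proof -
  let ?x = "vec_nth v"
  have x: "?x \<in> state_simplex A" using v by (simp add: SS_iff)
  let ?m = "mean_payoff A u ?x"
  have m: "?m > 0" by (rule mean_pos[OF upos x])
  have tws: "\<And>d. (\<Sum>t\<in>A d. trait_weighted_payoff A u ?x d t) = ?m" by (rule tw_sum[OF upos])
  have "(\<Sum>b\<in>types A. hc A u r b v) =
     (\<Sum>b\<in>types A. (1 - r) * (?x b * payoff_vs A u ?x b / ?m)
        + r * (\<Prod>d\<in>UNIV. trait_weighted_payoff A u ?x d (b d) / ?m))"
    by (simp add: hc_def recomb_field_def)
  also have "\<dots> = (1 - r) * ((\<Sum>b\<in>types A. ?x b * payoff_vs A u ?x b) / ?m)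
        + r * (\<Prod>d\<in>UNIV. \<Sum>t\<in>A d. trait_weighted_payoff A u ?x d t / ?m)"
    by (simp add: sum.distrib sum_distrib_left sum_divide_distrib prod_sum_types[symmetric])
  also have "\<dots> = 1"
    using m tws by (simp add: sum_divide_distrib[symmetric] tw_sum[OF upos] mean_payoff_def[symmetric])
  finally show ?thesis .
qed

lemma hc_nonneg:
  assumes v: "v \<in> SS A" and r: "0 \<le> r" "r \<le> 1" shows "hc A u r b v \<ge> 0"
proof (cases "b \<in> types A")
  case True
  let ?x = "vec_nth v"
  have x: "?x \<in> state_simplex A" using v by (simp add: SS_iff)
  have m: "mean_payoff A u ?x > 0" by (rule mean_pos[OF upos x])
  have "0 \<le> (1 - r) * (?x b * payoff_vs A u ?x b / mean_payoff A u ?x)"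
    using r m simplex_nonneg[OF x, of b] pv_nonneg[OF upos x True] by simp
  moreover have "0 \<le> r * (\<Prod>d\<in>UNIV. trait_weighted_payoff A u ?x d (b d) / mean_payoff A u ?x)"
    using r m tw_nonneg[OF upos x] by (simp add: prod_nonneg)
  ultimately show ?thesis using True by (simp add: hc_def recomb_field_def)
qed (simp add: hc_def)

lemma SS_coord: "v \<in> SS A \<Longrightarrow> \<bar>v $ i\<bar> \<le> 1"
  using simplex_le1[of "vec_nth v" A i] simplex_nonneg[of "vec_nth v" A i] by (simp add: SS_iff)

lemma LB_pv: "LB (SS A) (\<lambda>v. payoff_vs A u (vec_nth v) c)"
  unfolding payoff_vs_def
  by (intro LB_sum LB_mult LB_const LB_nth[OF SS_coord])

lemma LB_mean: "LB (SS A) (\<lambda>v. mean_payoff A u (vec_nth v))"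
  unfolding mean_payoff_def
  by (intro LB_sum LB_mult LB_pv LB_nth[OF SS_coord])

lemma LB_tw: "LB (SS A) (\<lambda>v. trait_weighted_payoff A u (vec_nth v) d t)"
  unfolding trait_weighted_payoff_def
  by (intro LB_sum LB_mult LB_pv LB_nth[OF SS_coord])

lemma LB_hc: "LB (SS A) (hc A u r b)"
proof (cases "b \<in> types A")
  case True
  have ne: "types A \<noteq> {}" using True by auto
  have mb: "\<And>v. v \<in> SS A \<Longrightarrow> umin A u \<le> mean_payoff A u (vec_nth v)"
    using mean_ge[of A u, OF upos] SS_iff by blast
  have "LB (SS A) (\<lambda>v. (1 - r) * (v $ b * payoff_vs A u (vec_nth v) b / mean_payoff A u (vec_nth v))
        + r * (\<Prod>d\<in>UNIV. trait_weighted_payoff A u (vec_nth v) d (b d) / mean_payoff A u (vec_nth v))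
        - v $ b + v $ b)"
    by (intro LB_add LB_diff LB_mult LB_const LB_prod LB_divide[OF _ LB_mean umin_pos[OF upos ne] mb]
        LB_nth[OF SS_coord] LB_pv LB_tw)
  moreover have "hc A u r b = (\<lambda>v. (1 - r) * (v $ b * payoff_vs A u (vec_nth v) b / mean_payoff A u (vec_nth v))
        + r * (\<Prod>d\<in>UNIV. trait_weighted_payoff A u (vec_nth v) d (b d) / mean_payoff A u (vec_nth v))
        - v $ b + v $ b)"
    using True by (simp add: hc_def recomb_field_def fun_eq_iff)
  ultimately show ?thesis by simp
next
  case False
  then have "hc A u r b = (\<lambda>v. 0)" by (simp add: hc_def fun_eq_iff)
  then show ?thesis by (simp add: LB_const)
qed

lemma rf_off:
  assumes x: "x \<in> state_simplex A" and b: "b \<notin> types A"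
  shows "recomb_field A u r x b = 0"
proof -
  obtain d where d: "b d \<notin> A d" using b by (auto simp: types_def)
  have e: "{a \<in> types A. a d = b d} = {}" using d by (auto simp: types_def) metis
  have "trait_weighted_payoff A u x d (b d) = 0" unfolding trait_weighted_payoff_def e by simp
  then have "(\<Prod>d\<in>UNIV. trait_weighted_payoff A u x d (b d) / mean_payoff A u x) = 0"
    by (intro prod_zero) auto
  then show ?thesis using simplex_off[OF x b] by (simp add: recomb_field_def)
qed

lemma solution_exists:
  assumes r: "0 \<le> r" "r \<le> 1" and x0: "x0 \<in> state_simplex A"
  shows "\<exists>x. x 0 = x0 \<and> recomb_solution A u r x \<and> (\<forall>t\<ge>0. x t \<in> state_simplex A)"
proof -
  define P where "P = closest_point (SS A)"
  have vl: "vec_nth (vec_lambda x0) = x0" by (simp add: fun_eq_iff)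
  have v0: "vec_lambda x0 \<in> SS A" using x0 by (simp add: SS_iff vl)
  have SSne: "SS A \<noteq> {}" using v0 by blast
  have Pin: "P v \<in> SS A" for v unfolding P_def by (rule closest_point_in_set[OF SS_closed SSne])
  have Pself: "v \<in> SS A \<Longrightarrow> P v = v" for v unfolding P_def by (rule closest_point_self)
  have Plip: "1-lipschitz_on UNIV P"
    by (rule lipschitz_onI) (auto simp: P_def intro: closest_point_lipschitz[OF SS_convex SS_closed SSne])
  obtain L where L: "L-lipschitz_on (SS A) (\<lambda>v. (\<chi> b. hc A u r b v) :: real^('d\<Rightarrow>'t))"
    using LB_vec[of "SS A" "\<lambda>b. hc A u r b", OF LB_hc] by blast
  define F where "F v = (\<chi> b. hc A u r b (P v)) - v" for v :: "real^('d\<Rightarrow>'t)"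
  have "(L * 1)-lipschitz_on UNIV ((\<lambda>v. (\<chi> b. hc A u r b v) :: real^('d\<Rightarrow>'t)) \<circ> P)"
    by (rule lipschitz_on_compose[OF Plip lipschitz_on_subset[OF L]]) (use Pin in auto)
  then have "(L * 1 + 1)-lipschitz_on UNIV F"
    unfolding F_def by (intro lipschitz_on_diff lipschitz_on_id) (simp add: o_def)
  from ode_global_exists[OF this, of "vec_lambda x0"] obtain X where
    X0: "X 0 = vec_lambda x0" and Xd: "\<And>t. 0 \<le> t \<Longrightarrow> (X has_vector_derivative F (X t)) (at t within {0..})"
    by blast
  have cd: "((\<lambda>s. X s $ b) has_real_derivative hc A u r b (P (X t)) - X t $ b) (at t within {0..})"
    if t: "0 \<le> t" for t b
  proof -
    have "((\<lambda>s. X s $ b) has_vector_derivative F (X t) $ b) (at t within {0..})"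
      by (rule bounded_linear.has_vector_derivative[OF bounded_linear_vec_nth Xd[OF t]])
    then show ?thesis by (simp add: has_real_derivative_iff_has_vector_derivative F_def)
  qed
  have off: "X t $ b = 0" if t: "0 \<le> t" and b: "b \<notin> types A" for t b
  proof -
    have "X t $ b = 0 + exp (- t) * (X 0 $ b - 0)"
    proof (rule exp_weight_const[where C=0 and g="\<lambda>s. X s $ b", OF _ t])
      fix s :: real assume s: "0 \<le> s"
      show "((\<lambda>s. X s $ b) has_real_derivative 0 - X s $ b) (at s within {0..})"
        using cd[OF s, of b] b by (simp add: hc_def)
    qed
    then show ?thesis using X0 simplex_off[OF x0 b] by simp
  qed
  have nn: "X t $ b \<ge> 0" if t: "0 \<le> t" for t b
  proof -
    have "X 0 $ b \<le> exp (1 * t) * X t $ b"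
      by (rule exp_weight_mono[OF cd _ t]) (use hc_nonneg[OF Pin r] in simp)+
    moreover have "X 0 $ b \<ge> 0" using X0 simplex_nonneg[OF x0] by simp
    ultimately have "0 \<le> exp t * X t $ b" by simp
    then show ?thesis by (simp add: zero_le_mult_iff)
  qed
  have sm: "(\<Sum>b\<in>types A. X t $ b) = 1" if t: "0 \<le> t" for t
  proof -
    have "(\<Sum>b\<in>types A. X t $ b) = 1 + exp (- t) * ((\<Sum>b\<in>types A. X 0 $ b) - 1)"
    proof (rule exp_weight_const[OF _ t])
      fix s :: real assume s: "0 \<le> s"
      have "((\<lambda>s. \<Sum>b\<in>types A. X s $ b) has_real_derivative
          (\<Sum>b\<in>types A. hc A u r b (P (X s)) - X s $ b)) (at s within {0..})"
        by (rule DERIV_sum) (rule cd[OF s])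
      then show "((\<lambda>s. \<Sum>b\<in>types A. X s $ b) has_real_derivative 1 - (\<Sum>b\<in>types A. X s $ b)) (at s within {0..})"
        by (simp add: sum_subtractf hc_sum[OF Pin])
    qed
    then show ?thesis using X0 simplex_sum[OF x0] by simp
  qed
  have inS: "X t \<in> SS A" if "0 \<le> t" for t
    using off nn sm that by (simp add: SS_def)
  show ?thesis
  proof (intro exI[of _ "\<lambda>t. vec_nth (X t)"] conjI allI impI)
    show "vec_nth (X 0) = x0" using X0 by (simp add: fun_eq_iff)
    show "vec_nth (X t) \<in> state_simplex A" if "0 \<le> t" for t using inS[OF that] by (simp add: SS_iff)
    show "recomb_solution A u r (\<lambda>t. vec_nth (X t))"
      unfolding recomb_solution_def
    proof (intro allI impI)
      fix b and t :: real assume t: "0 \<le> t"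
      have xs: "vec_nth (X t) \<in> state_simplex A" using inS[OF t] by (simp add: SS_iff)
      have "hc A u r b (P (X t)) - X t $ b = recomb_field A u r (vec_nth (X t)) b"
        using Pself[OF inS[OF t]] rf_off[OF xs] off[OF t] by (cases "b \<in> types A") (auto simp: hc_def)
      then show "((\<lambda>s. X s $ b) has_real_derivative recomb_field A u r (vec_nth (X t)) b) (at t within {0..})"
        using cd[OF t, of b] by simp
    qed
  qed
qed

lemma unstable:
  assumes r: "0 \<le> r" "r \<le> 1" and a: "a \<in> types A" and a': "a' \<in> types A" and ne: "a' \<noteq> a"
    and e: "0 < \<epsilon>" and dl: "0 < \<delta>"
    and rate: "\<And>y. y \<in> state_simplex A \<Longrightarrow> y a > 1 - \<epsilon> \<Longrightarrow> recomb_field A u r y a' \<ge> \<delta> * y a'"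
  shows "\<not> lyapunov_stable A u r (pure_state a)"
proof
  assume st: "lyapunov_stable A u r (pure_state a)"
  define U where "U = {x :: ('d \<Rightarrow> 't) \<Rightarrow> real. x a > 1 - \<epsilon>}"
  have oU: "open U" unfolding U_def
    by (rule open_Collect_less[OF continuous_on_const continuous_on_product_coordinates])
  have aU: "pure_state a \<in> U" using e by (simp add: U_def pure_state_def)
  obtain V where oV: "open V" and aV: "pure_state a \<in> V" and VU: "V \<subseteq> U"
    and sol: "\<And>x. recomb_solution A u r x \<Longrightarrow> x 0 \<in> V \<inter> state_simplex A \<Longrightarrow> \<forall>t>0. x t \<in> U"
    using st oU aU unfolding lyapunov_stable_def by metis
  define p where "p \<eta> = (\<lambda>b. (1 - \<eta>) * pure_state a b + \<eta> * pure_state a' b)" for \<eta> :: real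
  have cp: "continuous_on UNIV p"
    unfolding p_def by (intro continuous_on_coordinatewise_then_product continuous_intros)
  have "open (p -` V \<inter> UNIV)" using cp oV continuous_on_open_vimage[of UNIV p] by blast
  moreover have "0 \<in> p -` V \<inter> UNIV" using aV by (simp add: p_def)
  ultimately obtain e0 where e0: "e0 > 0" "ball 0 e0 \<subseteq> p -` V" unfolding open_contains_ball by blast
  define \<eta> where "\<eta> = min (e0/2) (1/2)"
  have \<eta>: "0 < \<eta>" "\<eta> < 1" using e0 by (auto simp: \<eta>_def)
  have "\<eta> \<in> ball 0 e0" using e0 \<eta> by (auto simp: \<eta>_def dist_real_def)
  then have pV: "p \<eta> \<in> V" using e0(2) by blast
  have ps: "p \<eta> \<in> state_simplex A"
  proof -
    have "(\<Sum>b\<in>types A. p \<eta> b) = (1 - \<eta>) * (\<Sum>b\<in>types A. pure_state a b) + \<eta> * (\<Sum>b\<in>types A. pure_state a' b)"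
      by (simp add: p_def sum.distrib sum_distrib_left)
    also have "\<dots> = 1" using a a' by (simp add: pure_state_def)
    finally show ?thesis using \<eta> a a' by (auto simp: state_simplex_def p_def pure_state_def)
  qed
  obtain x where x0: "x 0 = p \<eta>" and xs: "recomb_solution A u r x" and xin: "\<And>t. 0 \<le> t \<Longrightarrow> x t \<in> state_simplex A"
    using solution_exists[OF r ps] by blast
  have xU: "x t a > 1 - \<epsilon>" if t: "0 \<le> t" for t
  proof (cases "t = 0")
    case True then show ?thesis using pV VU x0 by (auto simp: U_def)
  next
    case False then have "t > 0" using t by simp
    then show ?thesis using sol[OF xs] x0 pV ps by (auto simp: U_def)
  qed
  define T where "T = 1 / (\<delta> * \<eta>)"
  have T0: "0 \<le> T" using dl \<eta> by (simp add: T_def)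
  have w: "x 0 a' \<le> exp (- \<delta> * T) * x T a'"
  proof (rule exp_weight_mono[OF _ _ T0])
    fix s :: real assume s: "0 \<le> s"
    show "((\<lambda>t. x t a') has_real_derivative recomb_field A u r (x s) a') (at s within {0..})"
      using xs s unfolding recomb_solution_def by blast
    show "0 \<le> recomb_field A u r (x s) a' + - \<delta> * x s a'"
      using rate[OF xin[OF s] xU[OF s]] by simp
  qed
  have x0a: "x 0 a' = \<eta>" using x0 ne by (simp add: p_def pure_state_def)
  have "x T a' \<le> 1" by (rule simplex_le1[OF xin[OF T0]])
  then have m: "exp (- \<delta> * T) * x T a' \<le> exp (- \<delta> * T) * 1" by (intro mult_left_mono) auto
  have "\<eta> \<le> exp (- \<delta> * T)" using order_trans[OF w m] x0a by simp
  then have h1: "\<eta> * exp (\<delta> * T) \<le> 1" by (simp add: exp_minus field_simps)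
  have "\<eta> * (1 + \<delta> * T) \<le> \<eta> * exp (\<delta> * T)"
    by (rule mult_left_mono[OF exp_ge_add_one_self]) (use \<eta> in simp)
  moreover have "\<eta> * (\<delta> * T) = 1" using dl \<eta> by (simp add: T_def)
  ultimately have "\<eta> + 1 \<le> \<eta> * exp (\<delta> * T)" by (simp add: distrib_left)
  then show False using h1 \<eta> by linarith
qed

end



lemma choose_eps:
  fixes \<phi> :: "real \<Rightarrow> real"
  assumes lim: "(\<phi> \<longlongrightarrow> l) (at_right 0)" and l: "l > 1"
  shows "\<exists>\<epsilon> \<delta>. 0 < \<epsilon> \<and> \<epsilon> < 1 \<and> 0 < \<delta> \<and> 1 + \<delta> \<le> \<phi> \<epsilon>"
proof -
  define \<delta> where "\<delta> = (l - 1) / 2"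
  have "\<forall>\<^sub>F x in at_right 0. 1 + \<delta> < \<phi> x"
    by (rule order_tendstoD(1)[OF lim]) (use l in \<open>simp add: \<delta>_def field_simps\<close>)
  then obtain b where b: "b > 0" "\<And>x. 0 < x \<Longrightarrow> x < b \<Longrightarrow> 1 + \<delta> < \<phi> x"
    unfolding eventually_at_right_field by auto
  define \<epsilon> where "\<epsilon> = min (b/2) (1/2)"
  have "0 < \<epsilon>" "\<epsilon> < 1" "\<epsilon> < b" using b by (auto simp: \<epsilon>_def)
  then show ?thesis using b(2)[of \<epsilon>] l by (intro exI[of _ \<epsilon>] exI[of _ \<delta>]) (auto simp: \<delta>_def)
qed

context
  fixes A :: "'d::finite \<Rightarrow> 't::finite set" and u :: "('d \<Rightarrow> 't) \<Rightarrow> ('d \<Rightarrow> 't) \<Rightarrow> real"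
  assumes upos: "\<And>b c. b \<in> types A \<Longrightarrow> c \<in> types A \<Longrightarrow> u b c > 0"
begin

lemma pv_le_max:
  assumes y: "y \<in> state_simplex A" and b: "b \<in> types A" shows "payoff_vs A u y b \<le> umax A u"
proof -
  have "payoff_vs A u y b \<le> (\<Sum>c\<in>types A. y c * umax A u)"
    unfolding payoff_vs_def
    by (intro sum_mono mult_left_mono umax_ge[OF upos b] simplex_nonneg[OF y]) auto
  also have "\<dots> = umax A u" using simplex_sum[OF y] by (simp add: sum_distrib_right[symmetric])
  finally show ?thesis .
qed

lemma pv_ge:
  assumes y: "y \<in> state_simplex A" and a: "a \<in> types A" and c: "c \<in> types A"
  shows "y a * u c a \<le> payoff_vs A u y c"
  unfolding payoff_vs_def
  by (rule member_le_sum[OF a]) (use simplex_nonneg[OF y] upos[OF c] in \<open>auto intro: mult_nonneg_nonneg less_imp_le\<close>)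

lemma umax_nonneg: assumes a: "a \<in> types A" shows "0 \<le> umax A u"
  using umax_ge[of A u, OF upos a a] upos[OF a a] by linarith

lemma sum_rest:
  assumes y: "y \<in> state_simplex A" and a: "a \<in> types A"
  shows "(\<Sum>b\<in>types A - {a}. y b) = 1 - y a"
  using sum.remove[OF fin_types a, of y] simplex_sum[OF y] by simp

lemma mean_le:
  assumes y: "y \<in> state_simplex A" and a: "a \<in> types A"
  shows "mean_payoff A u y \<le> u a a + 2 * (1 - y a) * umax A u"
proof -
  let ?M = "umax A u" and ?p = "payoff_vs A u y"
  have M0: "0 \<le> ?M" by (rule umax_nonneg[OF a])
  have ya: "0 \<le> y a" "y a \<le> 1" using simplex_nonneg[OF y] simplex_le1[OF y] by auto
  have pa: "?p a \<le> y a * u a a + (1 - y a) * ?M"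
  proof -
    have "?p a = y a * u a a + (\<Sum>c\<in>types A - {a}. y c * u a c)"
      unfolding payoff_vs_def using sum.remove[OF fin_types a, of "\<lambda>c. y c * u a c"] by simp
    also have "(\<Sum>c\<in>types A - {a}. y c * u a c) \<le> (\<Sum>c\<in>types A - {a}. y c * ?M)"
      by (intro sum_mono mult_left_mono umax_ge[OF upos a] simplex_nonneg[OF y]) auto
    also have "\<dots> = (1 - y a) * ?M" using sum_rest[OF y a] by (simp add: sum_distrib_right[symmetric])
    finally show ?thesis by simp
  qed
  have "mean_payoff A u y = y a * ?p a + (\<Sum>b\<in>types A - {a}. y b * ?p b)"
    unfolding mean_payoff_def using sum.remove[OF fin_types a, of "\<lambda>b. y b * ?p b"] by simp
  also have "(\<Sum>b\<in>types A - {a}. y b * ?p b) \<le> (\<Sum>b\<in>types A - {a}. y b * ?M)"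
    by (intro sum_mono mult_left_mono pv_le_max[OF y] simplex_nonneg[OF y]) auto
  also have "\<dots> = (1 - y a) * ?M" using sum_rest[OF y a] by (simp add: sum_distrib_right[symmetric])
  also have "y a * ?p a \<le> y a * (y a * u a a + (1 - y a) * ?M)"
    by (rule mult_left_mono[OF pa ya(1)])
  also have "y a * (y a * u a a + (1 - y a) * ?M) \<le> u a a + (1 - y a) * ?M"
  proof -
    have "y a * (y a * u a a) \<le> 1 * (1 * u a a)"
      using ya upos[OF a a] by (intro mult_mono) auto
    moreover have "y a * ((1 - y a) * ?M) \<le> 1 * ((1 - y a) * ?M)"
      using ya M0 by (intro mult_right_mono) auto
    ultimately show ?thesis by (simp add: distrib_left)
  qed
  finally show ?thesis by (simp add: algebra_simps)
qed

lemma rate_common: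
  assumes y: "y \<in> state_simplex A" and a: "a \<in> types A" and a': "a' \<in> types A"
    and e: "0 < \<epsilon>" "\<epsilon> < 1" and ya: "y a > 1 - \<epsilon>"
  shows "0 < mean_payoff A u y" "mean_payoff A u y \<le> u a a + 2 * \<epsilon> * umax A u"
    "y a' * ((1 - \<epsilon>) * u a' a / (u a a + 2 * \<epsilon> * umax A u)) \<le> y a' * payoff_vs A u y a' / mean_payoff A u y"
proof -
  show m: "0 < mean_payoff A u y" by (rule mean_pos[OF upos y])
  have M0: "0 \<le> umax A u" by (rule umax_nonneg[OF a])
  have "mean_payoff A u y \<le> u a a + 2 * (1 - y a) * umax A u" by (rule mean_le[OF y a])
  also have "\<dots> \<le> u a a + 2 * \<epsilon> * umax A u" using ya M0 by (intro add_left_mono mult_right_mono) auto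
  finally show mD: "mean_payoff A u y \<le> u a a + 2 * \<epsilon> * umax A u" .
  have "(1 - \<epsilon>) * u a' a \<le> y a * u a' a" using ya upos[OF a' a] by (intro mult_right_mono) auto
  also have "\<dots> \<le> payoff_vs A u y a'" by (rule pv_ge[OF y a a'])
  finally have pv: "(1 - \<epsilon>) * u a' a \<le> payoff_vs A u y a'" .
  have "(1 - \<epsilon>) * u a' a / (u a a + 2 * \<epsilon> * umax A u) \<le> payoff_vs A u y a' / mean_payoff A u y"
    by (rule frac_le[OF pv_nonneg[OF upos y a'] pv m mD])
  then show "y a' * ((1 - \<epsilon>) * u a' a / (u a a + 2 * \<epsilon> * umax A u)) \<le> y a' * payoff_vs A u y a' / mean_payoff A u y"
    using simplex_nonneg[OF y, of a'] by (simp add: mult_left_mono times_divide_eq_right[symmetric] del: times_divide_eq_right)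
qed

lemma rate2:
  assumes r: "0 \<le> r" "r \<le> 1" and y: "y \<in> state_simplex A" and a: "a \<in> types A" and a': "a' \<in> types A"
    and e: "0 < \<epsilon>" "\<epsilon> < 1" and ya: "y a > 1 - \<epsilon>"
  shows "recomb_field A u r y a' \<ge> y a' * ((1 - r) * ((1 - \<epsilon>) * u a' a / (u a a + 2 * \<epsilon> * umax A u)) - 1)"
proof -
  note rc = rate_common[OF y a a' e ya]
  have pr: "0 \<le> r * (\<Prod>d\<in>UNIV. trait_weighted_payoff A u y d (a' d) / mean_payoff A u y)"
    using r rc(1) tw_nonneg[OF upos y] by (simp add: prod_nonneg)
  have "(1 - r) * (y a' * ((1 - \<epsilon>) * u a' a / (u a a + 2 * \<epsilon> * umax A u))) \<le> (1 - r) * (y a' * payoff_vs A u y a' / mean_payoff A u y)"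
    using rc(3) r by (intro mult_left_mono) auto
  then show ?thesis using pr by (simp add: recomb_field_def algebra_simps)
qed

lemma rate1:
  assumes r: "0 \<le> r" "r \<le> 1" and y: "y \<in> state_simplex A" and a: "a \<in> types A" and t: "t \<in> A d"
    and e: "0 < \<epsilon>" "\<epsilon> < 1" and ya: "y a > 1 - \<epsilon>"
  shows "recomb_field A u r y (a(d := t)) \<ge> y (a(d := t)) *
     ((1 - \<epsilon>) * u (a(d := t)) a / (u a a + 2 * \<epsilon> * umax A u)
       * ((1 - \<epsilon>)^2 * u a a / (u a a + 2 * \<epsilon> * umax A u)) ^ (CARD('d) - 1) - 1)"
proof -
  define a' where "a' = a(d := t)"
  have a': "a' \<in> types A" using a t by (auto simp: types_def a'_def)
  note rc = rate_common[OF y a a' e ya]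
  define m where "m = mean_payoff A u y"
  define Dn where "Dn = u a a + 2 * \<epsilon> * umax A u"
  define q where "q = (1 - \<epsilon>)^2 * u a a / Dn"
  define Z where "Z = y a' * payoff_vs A u y a' / m"
  define F where "F d' = trait_weighted_payoff A u y d' (a' d') / m" for d'
  have m: "0 < m" "m \<le> Dn" using rc(1,2) by (auto simp: m_def Dn_def)
  have uaa: "0 < u a a" by (rule upos[OF a a])
  have Dpos: "0 < Dn" using m by linarith
  have q0: "0 \<le> q" using e uaa Dpos by (simp add: q_def)
  have q1: "q \<le> 1"
  proof -
    have "(1 - \<epsilon>)^2 * u a a \<le> 1 * u a a" using e uaa
      by (intro mult_right_mono) (auto simp: power2_eq_square mult_le_one)
    also have "\<dots> \<le> Dn" using m rc(1) mean_ge[OF upos y] umax_nonneg[OF a] e by (simp add: Dn_def)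
    finally show ?thesis using Dpos by (simp add: q_def)
  qed
  have Z0: "0 \<le> Z" using simplex_nonneg[OF y] pv_nonneg[OF upos y a'] m by (simp add: Z_def)
  have ya0: "0 \<le> y a" using simplex_nonneg[OF y] .
  have Fd: "Z \<le> F d"
  proof -
    have "y a' * payoff_vs A u y a' \<le> trait_weighted_payoff A u y d (a' d)"
      unfolding trait_weighted_payoff_def
      by (rule member_le_sum) (use a' simplex_nonneg[OF y] pv_nonneg[OF upos y] in auto)
    then show ?thesis using m by (simp add: Z_def F_def divide_right_mono)
  qed
  have Fo: "q \<le> F d'" if "d' \<noteq> d" for d'
  proof -
    have "(1 - \<epsilon>) * ((1 - \<epsilon>) * u a a) \<le> y a * (y a * u a a)"
      using ya e uaa ya0 by (intro mult_mono mult_right_mono) auto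
    also have "y a * (y a * u a a) \<le> y a * payoff_vs A u y a"
      by (rule mult_left_mono[OF pv_ge[OF y a a] ya0])
    also have "\<dots> \<le> trait_weighted_payoff A u y d' (a' d')"
      unfolding trait_weighted_payoff_def
      by (rule member_le_sum) (use a that simplex_nonneg[OF y] pv_nonneg[OF upos y] in \<open>auto simp: a'_def\<close>)
    finally have num: "(1 - \<epsilon>)^2 * u a a \<le> trait_weighted_payoff A u y d' (a' d')"
      by (simp add: power2_eq_square mult.assoc)
    show ?thesis unfolding q_def F_def
      by (rule frac_le[OF tw_nonneg[OF upos y] num m(1) m(2)])
  qed
  define low where "low d' = (if d' = d then Z else q)" for d'
  have "(\<Prod>d'\<in>UNIV. low d') \<le> (\<Prod>d'\<in>UNIV. F d')"
    by (rule prod_mono) (use Z0 q0 Fd Fo in \<open>auto simp: low_def\<close>)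
  moreover have "(\<Prod>d'\<in>UNIV. low d') = Z * q ^ (CARD('d) - 1)"
  proof -
    have "(\<Prod>d'\<in>UNIV. low d') = low d * (\<Prod>d'\<in>UNIV - {d}. low d')"
      by (rule prod.remove) auto
    also have "(\<Prod>d'\<in>UNIV - {d}. low d') = (\<Prod>d'\<in>UNIV - {d}. q)"
      by (rule prod.cong) (auto simp: low_def)
    also have "\<dots> = q ^ (CARD('d) - 1)" by (simp add: card_Diff_singleton)
    finally show ?thesis by (simp add: low_def)
  qed
  ultimately have P: "Z * q ^ (CARD('d) - 1) \<le> (\<Prod>d'\<in>UNIV. F d')" by simp
  have qk: "q ^ (CARD('d) - 1) \<le> 1" using q0 q1 by (rule power_le_one)
  have qk0: "0 \<le> q ^ (CARD('d) - 1)" using q0 by simp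
  have "Z * q ^ (CARD('d) - 1) \<le> (1 - r) * Z + r * (\<Prod>d'\<in>UNIV. F d')"
  proof -
    have "Z * q ^ (CARD('d) - 1) = (1 - r) * (Z * q ^ (CARD('d) - 1)) + r * (Z * q ^ (CARD('d) - 1))"
      by (simp add: algebra_simps)
    also have "\<dots> \<le> (1 - r) * Z + r * (\<Prod>d'\<in>UNIV. F d')"
    proof (rule add_mono)
      show "(1 - r) * (Z * q ^ (CARD('d) - 1)) \<le> (1 - r) * Z"
        using r Z0 qk mult_left_mono[OF qk Z0] by (intro mult_left_mono) auto
      show "r * (Z * q ^ (CARD('d) - 1)) \<le> r * (\<Prod>d'\<in>UNIV. F d')"
        using r P by (intro mult_left_mono) auto
    qed
    finally show ?thesis .
  qed
  moreover have "y a' * ((1 - \<epsilon>) * u a' a / Dn) * q ^ (CARD('d) - 1) \<le> Z * q ^ (CARD('d) - 1)"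
    using rc(3) qk0 by (intro mult_right_mono) (auto simp: Z_def m_def Dn_def)
  moreover have "recomb_field A u r y a' = (1 - r) * Z + r * (\<Prod>d'\<in>UNIV. F d') - y a'"
    by (simp add: recomb_field_def Z_def F_def m_def)
  ultimately show ?thesis unfolding a'_def[symmetric] Dn_def[symmetric] q_def[symmetric]
    by (simp add: algebra_simps)
qed

end

theorem corollary1:
  fixes A :: "'d::finite \<Rightarrow> 't::finite set"
    and u :: "('d \<Rightarrow> 't) \<Rightarrow> ('d \<Rightarrow> 't) \<Rightarrow> real"
    and r :: real and a :: "'d \<Rightarrow> 't"
  assumes "CARD('d) \<ge> 2"
    and "\<And>b c. b \<in> types A \<Longrightarrow> c \<in> types A \<Longrightarrow> u b c > 0"
    and "0 \<le> r" and "r \<le> 1"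
    and "a \<in> types A"
    and "lyapunov_stable A u r (pure_state a)"
  shows "(\<forall>d. \<forall>t\<in>A d. u a a \<ge> u (a(d := t)) a)
       \<and> (\<forall>a'\<in>types A. u a a \<ge> (1 - r) * u a' a)"
proof -
  note upos = assms(2) and r = assms(3,4) and a = assms(5) and st = assms(6)
  define M where "M = umax A u"
  have uaa: "0 < u a a" by (rule upos[OF a a])
  have M0: "0 \<le> M" unfolding M_def by (rule umax_nonneg[of A u, OF upos a])
  have part1: "u a a \<ge> u (a(d := t)) a" if t: "t \<in> A d" for d t
  proof (rule ccontr)
    assume c: "\<not> u (a(d := t)) a \<le> u a a"
    define a' where "a' = a(d := t)"
    have a': "a' \<in> types A" using a t by (auto simp: types_def a'_def)
    have ne: "a' \<noteq> a" using c by (auto simp: a'_def)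
    define k where "k = CARD('d) - 1"
    define \<phi> where "\<phi> \<epsilon> = (1 - \<epsilon>) * u a' a / (u a a + 2 * \<epsilon> * M) * ((1 - \<epsilon>)^2 * u a a / (u a a + 2 * \<epsilon> * M)) ^ k" for \<epsilon> :: real
    have "(\<phi> \<longlongrightarrow> (1 - 0) * u a' a / (u a a + 2 * 0 * M) * ((1 - 0)^2 * u a a / (u a a + 2 * 0 * M)) ^ k) (at_right 0)"
      unfolding \<phi>_def by (intro tendsto_intros) (use uaa in auto)
    then have lim: "(\<phi> \<longlongrightarrow> u a' a / u a a) (at_right 0)" using uaa by simp
    have "u a' a / u a a > 1" using c uaa by (simp add: a'_def)
    from choose_eps[OF lim this] obtain \<epsilon> \<delta> where ed: "0 < \<epsilon>" "\<epsilon> < 1" "0 < \<delta>" "1 + \<delta> \<le> \<phi> \<epsilon>" by blast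
    have "\<not> lyapunov_stable A u r (pure_state a)"
    proof (rule unstable[of A u, OF upos r a a' ne ed(1) ed(3)])
      fix y assume y: "y \<in> state_simplex A" and ya: "1 - \<epsilon> < y a"
      have "y a' * (\<phi> \<epsilon> - 1) \<le> recomb_field A u r y a'"
        using rate1[of A u, OF upos r y a t ed(1,2) ya] unfolding \<phi>_def a'_def M_def k_def by linarith
      moreover have "y a' * \<delta> \<le> y a' * (\<phi> \<epsilon> - 1)"
        using ed(4) simplex_nonneg[OF y, of a'] by (intro mult_left_mono) auto
      ultimately show "\<delta> * y a' \<le> recomb_field A u r y a'" by (simp add: mult.commute)
    qed
    then show False using st by blast
  qed
  have part2: "u a a \<ge> (1 - r) * u a' a" if a': "a' \<in> types A" for a'
  proof (cases "a' = a")
    case True then show ?thesis using r uaa by (simp add: mult_le_cancel_right1)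
  next
    case ne: False
    show ?thesis
    proof (rule ccontr)
      assume c: "\<not> (1 - r) * u a' a \<le> u a a"
      define \<phi> where "\<phi> \<epsilon> = (1 - r) * ((1 - \<epsilon>) * u a' a / (u a a + 2 * \<epsilon> * M))" for \<epsilon> :: real
      have "(\<phi> \<longlongrightarrow> (1 - r) * ((1 - 0) * u a' a / (u a a + 2 * 0 * M))) (at_right 0)"
        unfolding \<phi>_def by (intro tendsto_intros) (use uaa in auto)
      then have lim: "(\<phi> \<longlongrightarrow> (1 - r) * u a' a / u a a) (at_right 0)" using uaa by simp
      have "(1 - r) * u a' a / u a a > 1" using c uaa by simp
      from choose_eps[OF lim this] obtain \<epsilon> \<delta> where ed: "0 < \<epsilon>" "\<epsilon> < 1" "0 < \<delta>" "1 + \<delta> \<le> \<phi> \<epsilon>" by blast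
      have "\<not> lyapunov_stable A u r (pure_state a)"
      proof (rule unstable[of A u, OF upos r a a' ne ed(1) ed(3)])
        fix y assume y: "y \<in> state_simplex A" and ya: "1 - \<epsilon> < y a"
        have "y a' * (\<phi> \<epsilon> - 1) \<le> recomb_field A u r y a'"
          using rate2[of A u, OF upos r y a a' ed(1,2) ya] unfolding \<phi>_def M_def by linarith
        moreover have "y a' * \<delta> \<le> y a' * (\<phi> \<epsilon> - 1)"
          using ed(4) simplex_nonneg[OF y, of a'] by (intro mult_left_mono) auto
        ultimately show "\<delta> * y a' \<le> recomb_field A u r y a'" by (simp add: mult.commute)
      qed
      then show False using st by blast
    qed
  qed
  show ?thesis using part1 part2 by blast
qed


end
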